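(* Let $\Omega\subset\mathbb{R}^n$ be open, $\omega\in A_\infty$, and $\varphi(x,t)=t^{p(x)}$ where $p:\Omega\to[1,\infty]$ is measurable and $\frac1p$ satisfies the log-Hölder decay condition. Then $\varphi$ satisfies (A2)$_\omega$.
   Context: Convention: $t^\infty:=\infty\cdot\chi_{(1,\infty)}(t)$ and $1/\infty:=0$. $\frac1p$ satisfies the log-Hölder decay condition if there exist $p_\infty\in[1,\infty]$ and $c_2>0$ with $\big|\frac1{p(x)}-\frac1{p_\infty}\big|\le\frac{c_2}{\log(e+|x|)}$ for all $x\in\Omega$. A weight is a nonnegative locally integrable function $\omega$ on $\mathbb{R}^n$, $\omega(E):=\int_E\omega\,dx$; $L^1(\Omega,\omega)$ is the set of measurable $h$ with $\int_\Omega|h|\omega\,dx<\infty$. For $1<q<\infty$, $\omega\in A_q$ means $\sup_B|B|^{-q}\omega(B)\big(\int_B\omega^{-q'/q}dx\big)^{q-1}<\infty$ with $1/q+1/q'=1$, supremum over open balls; $\omega\in A_1$ means $M\omega\le C\omega$ a.e.; $A_\infty:=\bigcup_{q\in[1,\infty)}A_q$. (A2)$_\omega$: for every $s>0$ there exist $\beta_2\in(0,1]$ and $h\in L^1(\Omega,\omega)\cap L^\infty(\Omega)$, $h\ge0$, such that $\varphi(x,\beta_2t)\le\varphi(y,t)+h(x)+h(y)$ for a.e. $x,y\in\Omega$ whenever $\varphi(y,t)\in[0,s]$. *)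

theory Defs
  imports "HOL-Analysis.Analysis"
begin

definition is_weight :: "('a::euclidean_space \<Rightarrow> real) \<Rightarrow> bool" where
  "is_weight w \<longleftrightarrow> (\<forall>x. 0 \<le> w x) \<and> (\<forall>K. compact K \<longrightarrow> set_integrable lebesgue K w)"

definition wmeas :: "('a::euclidean_space \<Rightarrow> real) \<Rightarrow> 'a set \<Rightarrow> ennreal" where
  "wmeas w E = (\<integral>\<^sup>+ y\<in>E. ennreal (w y) \<partial>lebesgue)"

definition epowr :: "ennreal \<Rightarrow> real \<Rightarrow> ennreal" where
  "epowr x a = (if x = \<infinity> then \<infinity> else ennreal (enn2real x powr a))"

text \<open>A_q for 1 < q < infinity: sup over open balls B of
  |B|^{-q} w(B) (int_B w^{-q'/q})^{q-1} is finite; note q'/q = 1/(q-1), and w^{-1/(q-1)} = infinity where w = 0.\<close>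
definition A_q :: "real \<Rightarrow> ('a::euclidean_space \<Rightarrow> real) set" where
  "A_q q = {w. is_weight w \<and>
     (\<exists>C::real. \<forall>c r. 0 < r \<longrightarrow>
        wmeas w (ball c r) *
          epowr (\<integral>\<^sup>+ y\<in>ball c r. (if w y = 0 then \<infinity> else ennreal (w y powr (- 1 / (q - 1)))) \<partial>lebesgue) (q - 1)
        \<le> ennreal C * ennreal (measure lebesgue (ball c r) powr q))}"

definition maximal_fn :: "('a::euclidean_space \<Rightarrow> real) \<Rightarrow> 'a \<Rightarrow> ennreal" where
  "maximal_fn w x = (SUP B\<in>{ball c r | c r. 0 < r \<and> x \<in> ball c r}.
       ennreal (1 / measure lebesgue B) * (\<integral>\<^sup>+ y\<in>B. ennreal \<bar>w y\<bar> \<partial>lebesgue))"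

definition A_1 :: "('a::euclidean_space \<Rightarrow> real) set" where
  "A_1 = {w. is_weight w \<and> (\<exists>C::real. AE x in lebesgue. maximal_fn w x \<le> ennreal C * ennreal (w x))}"

definition A_inf :: "('a::euclidean_space \<Rightarrow> real) set" where
  "A_inf = A_1 \<union> (\<Union>q\<in>{1<..}. A_q q)"

text \<open>1/p with the convention 1/infinity = 0.\<close>
definition recip :: "ereal \<Rightarrow> real" where
  "recip e = real_of_ereal (inverse e)"

definition log_Hoelder_decay :: "'a::euclidean_space set \<Rightarrow> ('a \<Rightarrow> ereal) \<Rightarrow> bool" where
  "log_Hoelder_decay \<Omega> p \<longleftrightarrow> (\<exists>p_inf::ereal. 1 \<le> p_inf \<and> (\<exists>c2>0. \<forall>x\<in>\<Omega>.
      \<bar>recip (p x) - recip p_inf\<bar> \<le> c2 / ln (exp 1 + norm x)))"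

definition var_power :: "('a \<Rightarrow> ereal) \<Rightarrow> 'a \<Rightarrow> real \<Rightarrow> ennreal" where
  "var_power p x t = (if p x = \<infinity> then (if 1 < t then \<infinity> else 0)
                      else ennreal (t powr real_of_ereal (p x)))"

definition A2_weighted :: "'a::euclidean_space set \<Rightarrow> ('a \<Rightarrow> real) \<Rightarrow> ('a \<Rightarrow> real \<Rightarrow> ennreal) \<Rightarrow> bool" where
  "A2_weighted \<Omega> w \<phi> \<longleftrightarrow> (\<forall>s::real. 0 < s \<longrightarrow> (\<exists>\<beta>2 h. 0 < \<beta>2 \<and> \<beta>2 \<le> 1 \<and>
      h \<in> borel_measurable (restrict_space lebesgue \<Omega>) \<and>
      (\<forall>x\<in>\<Omega>. 0 \<le> h x) \<and>
      (\<integral>\<^sup>+ x\<in>\<Omega>. ennreal (\<bar>h x\<bar> * w x) \<partial>lebesgue) < \<infinity> \<and>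
      (\<exists>M::real. AE x in lebesgue. x \<in> \<Omega> \<longrightarrow> \<bar>h x\<bar> \<le> M) \<and>
      (\<exists>N \<in> null_sets lebesgue. \<forall>x\<in>\<Omega> - N. \<forall>y\<in>\<Omega> - N. \<forall>t::real. 0 \<le> t \<longrightarrow>
          \<phi> y t \<le> ennreal s \<longrightarrow>
          \<phi> x (\<beta>2 * t) \<le> \<phi> y t + ennreal (h x) + ennreal (h y))))"

end

theory Submission
  imports Defs
begin

lemma core_real:
  fixes a b c m lx ly q L l :: real
  assumes a: "0 < a" and b: "0 \<le> b" and c: "0 < c" and m: "0 < m"
    and lx: "1 \<le> lx" and ly: "1 \<le> ly"
    and ax: "\<bar>a - q\<bar> \<le> c / lx" and by': "\<bar>b - q\<bar> \<le> c / ly"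
    and L: "0 \<le> L" and l: "l = 2 * c * m"
  shows "m * lx \<le> (L + l) / a \<or> m * ly \<le> (L + l) / a \<or> (0 < b \<and> L / b \<le> (L + l) / a)"
proof (rule ccontr)
  assume H: "\<not> ?thesis"
  define lam where "lam = min lx ly"
  have lam1: "1 \<le> lam" using lx ly by (simp add: lam_def)
  have "c / lx \<le> c / lam" "c / ly \<le> c / lam" using lam1 c
    by (auto simp: lam_def intro!: divide_left_mono)
  hence ab: "a \<le> b + 2 * c / lam" using ax by' by auto
  have "(L + l) / a < m * lam" using H by (auto simp: lam_def min_def)
  hence lt: "L + l < a * m * lam" using a by (simp add: field_simps)
  have "a * m * lam \<le> (b + 2 * c / lam) * m * lam"
    using ab m lam1 by (intro mult_right_mono) auto
  also have "\<dots> = b * m * lam + 2 * c * m" using lam1 by (simp add: field_simps)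
  finally have lt2: "L + l < b * m * lam + l" using lt l by simp
  show False
  proof (cases "b = 0")
    case True thus False using lt2 L by simp
  next
    case False
    hence bp: "0 < b" using b by simp
    hence "\<not> L / b \<le> (L + l) / a" using H by auto
    hence "b * (L + l) < a * L" using a bp by (simp add: field_simps)
    also have "a * L \<le> (b + 2 * c / lam) * L" using ab L by (intro mult_right_mono) auto
    finally have "b * l < 2 * c * L / lam" by (simp add: field_simps)
    hence "b * l * lam < 2 * c * L" using lam1 by (simp add: field_simps)
    hence "2 * c * (b * m * lam) < 2 * c * L" using l by (simp add: algebra_simps)
    hence "b * m * lam < L" using c by simp
    thus False using lt2 l c m by (smt (verit) mult_pos_pos)
  qed
qed

lemma meas_ball:
  fixes c :: "'a::euclidean_space"
  assumes "0 \<le> r"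
  shows "measure lebesgue (ball c r) = r ^ DIM('a) * measure lebesgue (ball (0::'a) 1)"
  using content_ball_conv_unit_ball[OF assms, of c] by (simp add: measure_completion)

lemma meas_ball1_pos: "0 < measure lebesgue (ball (0::'a::euclidean_space) 1)"
  using content_ball_pos[of 1 "0::'a"] by (simp add: measure_completion)

lemma weight_meas:
  assumes "is_weight w"
  shows "(\<lambda>x. indicator (cball 0 R) x * w x) \<in> borel_measurable lebesgue"
proof -
  have "set_integrable lebesgue (cball 0 R) w" using assms by (auto simp: is_weight_def)
  thus ?thesis unfolding set_integrable_def by (auto dest: borel_measurable_integrable)
qed

lemma weight_ball_fin:
  assumes "is_weight w"
  shows "wmeas w (ball 0 R) < \<infinity>"
proof -
  have "set_integrable lebesgue (cball 0 R) w" using assms by (auto simp: is_weight_def)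
  hence "(\<integral>\<^sup>+ x. ennreal (norm (indicator (cball 0 R) x *\<^sub>R w x)) \<partial>lebesgue) < \<infinity>"
    unfolding set_integrable_def by (simp add: integrable_iff_bounded)
  moreover have "wmeas w (ball 0 R) \<le> (\<integral>\<^sup>+ x. ennreal (norm (indicator (cball 0 R) x *\<^sub>R w x)) \<partial>lebesgue)"
    unfolding wmeas_def using assms
    by (intro nn_integral_mono) (auto simp: is_weight_def indicator_def)
  ultimately show ?thesis by simp
qed

lemma ennreal_div_le:
  assumes "0 < k" "X * ennreal k \<le> ennreal Y"
  shows "X \<le> ennreal (Y / k)"
proof -
  have "X = X * ennreal k * ennreal (1 / k)"
    using assms(1) by (simp add: mult.assoc ennreal_mult[symmetric])
  also have "\<dots> \<le> ennreal Y * ennreal (1 / k)" using assms(2) by (intro mult_right_mono) auto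
  also have "\<dots> = ennreal (Y / k)" using assms(1) by (cases "Y \<ge> 0") (auto simp: ennreal_mult[symmetric] ennreal_neg divide_nonpos_pos)
  finally show ?thesis .
qed

lemma growth_A1:
  fixes w :: "'a::euclidean_space \<Rightarrow> real"
  assumes "w \<in> A_1"
  shows "\<exists>C D. 0 \<le> C \<and> 0 \<le> D \<and> (\<forall>R\<ge>1. wmeas w (ball 0 R) \<le> ennreal (C * R powr D))"
proof -
  obtain C0 where wt: "is_weight w" and ae: "AE x in lebesgue. maximal_fn w x \<le> ennreal C0 * ennreal (w x)"
    using assms by (auto simp: A_1_def)
  define V where "V = measure lebesgue (ball (0::'a) 1)"
  have V: "0 < V" using meas_ball1_pos by (simp add: V_def)
  obtain x0 where x0: "x0 \<in> ball (0::'a) 1" "maximal_fn w x0 \<le> ennreal C0 * ennreal (w x0)"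
  proof -
    from ae obtain N where N: "{x \<in> space lebesgue. \<not> maximal_fn w x \<le> ennreal C0 * ennreal (w x)} \<subseteq> N"
      "emeasure lebesgue N = 0" "N \<in> sets lebesgue" by (auto elim: AE_E)
    have "\<not> ball (0::'a) 1 \<subseteq> N"
    proof
      assume "ball (0::'a) 1 \<subseteq> N"
      hence "emeasure lebesgue (ball (0::'a) 1) \<le> 0" using N by (metis emeasure_mono)
      moreover have "emeasure lebesgue (ball (0::'a) 1) = ennreal V"
        unfolding V_def by (simp add: emeasure_eq_measure2 emeasure_lborel_ball_finite)
      ultimately show False using V by simp
    qed
    then obtain x where x: "x \<in> ball (0::'a) 1" "x \<notin> N" by blast
    have "maximal_fn w x \<le> ennreal C0 * ennreal (w x)" using N(1) x(2) by auto
    thus ?thesis using that x(1) by blast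
  qed
  define C where "C = V * (max 0 C0 * w x0)"
  have w0: "0 \<le> w x0" using wt by (auto simp: is_weight_def)
  have "wmeas w (ball 0 R) \<le> ennreal (C * R powr real DIM('a))" if R: "1 \<le> R" for R
  proof -
    define M where "M = measure lebesgue (ball (0::'a) R)"
    have M: "M = R ^ DIM('a) * V" using meas_ball[of R "0::'a"] R by (simp add: M_def V_def)
    have Mp: "0 < M" using M V R by simp
    have "ennreal (1 / M) * wmeas w (ball 0 R) \<le> maximal_fn w x0"
      unfolding maximal_fn_def wmeas_def M_def
    proof (rule SUP_upper2[where i="ball 0 R"])
      show "ball 0 R \<in> {ball c r |c r. 0 < r \<and> x0 \<in> ball c r}" using x0 R by force
      have "\<And>y. \<bar>w y\<bar> = w y" using wt by (auto simp: is_weight_def)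
      thus "ennreal (1 / measure lebesgue (ball (0::'a) R)) * set_nn_integral lebesgue (ball 0 R) (\<lambda>y. ennreal (w y))
         \<le> ennreal (1 / measure lebesgue (ball (0::'a) R)) * set_nn_integral lebesgue (ball 0 R) (\<lambda>y. ennreal \<bar>w y\<bar>)" by simp
    qed
    also have "\<dots> \<le> ennreal (max 0 C0 * w x0)"
      using x0(2) w0 by (cases "C0 \<ge> 0") (auto simp: ennreal_mult[symmetric] ennreal_neg)
    finally have "wmeas w (ball 0 R) * ennreal (1 / M) \<le> ennreal (max 0 C0 * w x0)" by (simp add: mult.commute)
    hence "wmeas w (ball 0 R) \<le> ennreal (max 0 C0 * w x0 / (1 / M))" using Mp by (intro ennreal_div_le) auto
    also have "max 0 C0 * w x0 / (1 / M) = C * R powr real DIM('a)"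
      using R by (simp add: M C_def powr_realpow)
    finally show ?thesis .
  qed
  moreover have "0 \<le> C" using V w0 by (simp add: C_def)
  ultimately show ?thesis by (intro exI[of _ C] exI[of _ "real DIM('a)"]) auto
qed

lemma growth_Aq:
  fixes w :: "'a::euclidean_space \<Rightarrow> real"
  assumes q: "1 < q" and wq: "w \<in> A_q q"
  shows "\<exists>C D. 0 \<le> C \<and> 0 \<le> D \<and> (\<forall>R\<ge>1. wmeas w (ball 0 R) \<le> ennreal (C * R powr D))"
proof -
  define \<sigma> where "\<sigma> = (\<lambda>y. if w y = 0 then \<infinity> else ennreal (w y powr (- 1 / (q - 1))))"
  obtain C0 where wt: "is_weight w" and AC: "\<And>c r. 0 < r \<Longrightarrow>
        wmeas w (ball c r) * epowr (\<integral>\<^sup>+ y\<in>ball c r. \<sigma> y \<partial>lebesgue) (q - 1)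
        \<le> ennreal C0 * ennreal (measure lebesgue (ball c r) powr q)"
    using wq unfolding A_q_def \<sigma>_def by blast
  define V where "V = measure lebesgue (ball (0::'a) 1)"
  have V: "0 < V" using meas_ball1_pos by (simp add: V_def)
  have emb: "emeasure lebesgue (ball (0::'a) 1) = ennreal V"
    unfolding V_def by (simp add: emeasure_eq_measure2 emeasure_lborel_ball_finite)
  define f1 where "f1 = (\<lambda>x. indicator (cball (0::'a) 1) x * w x)"
  have f1m: "f1 \<in> borel_measurable lebesgue" unfolding f1_def by (rule weight_meas[OF wt])
  define E where "E = (\<lambda>k::nat. {x \<in> ball (0::'a) 1. f1 x \<le> real k})"
  have Em: "E k \<in> sets lebesgue" for k
  proof -
    have "{x \<in> space lebesgue. f1 x \<le> real k} \<in> sets lebesgue" using f1m by measurable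
    moreover have "ball (0::'a) 1 \<in> sets lebesgue" by simp
    ultimately have "ball (0::'a) 1 \<inter> {x \<in> space lebesgue. f1 x \<le> real k} \<in> sets lebesgue" by blast
    moreover have "ball (0::'a) 1 \<inter> {x \<in> space lebesgue. f1 x \<le> real k} = E k" by (auto simp: E_def)
    ultimately show ?thesis by simp
  qed
  have "\<exists>k. emeasure lebesgue (E k) \<noteq> 0"
  proof (rule ccontr)
    assume "\<not> ?thesis"
    hence "E k \<in> null_sets lebesgue" for k using Em by auto
    hence "(\<Union>k. E k) \<in> null_sets lebesgue" by blast
    moreover have "(\<Union>k. E k) = ball (0::'a) 1"
    proof safe
      fix x :: 'a assume "x \<in> ball 0 1"
      moreover obtain k :: nat where "f1 x \<le> real k" using real_arch_simple by blast
      ultimately show "x \<in> (\<Union>k. E k)" by (auto simp: E_def)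
    qed (auto simp: E_def)
    ultimately show False using emb V by auto
  qed
  then obtain k where Ek: "emeasure lebesgue (E k) \<noteq> 0" by blast
  define K where "K = real k + 1"
  have K: "0 < K" by (simp add: K_def)
  define mE where "mE = measure lebesgue (E k)"
  have Efin: "emeasure lebesgue (E k) \<le> ennreal V" unfolding emb[symmetric]
    by (rule emeasure_mono) (auto simp: E_def)
  hence EmE: "emeasure lebesgue (E k) = ennreal mE"
    unfolding mE_def using Em by (intro emeasure_eq_measure2 fmeasurableI) (auto intro: le_less_trans[OF _ ennreal_less_top])
  have mE: "0 < mE" using Ek EmE measure_nonneg[of lebesgue "E k"] unfolding mE_def by (metis ennreal_0 order_less_le)
  define \<kappa>0 where "\<kappa>0 = K powr (- 1 / (q - 1))"
  have \<kappa>0: "0 < \<kappa>0" using K by (simp add: \<kappa>0_def)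
  define \<kappa> where "\<kappa> = \<kappa>0 * mE"
  have \<kappa>: "0 < \<kappa>" using \<kappa>0 mE by (simp add: \<kappa>_def)
  have Ilow: "ennreal \<kappa> \<le> (\<integral>\<^sup>+ y\<in>ball 0 R. \<sigma> y \<partial>lebesgue)" if R: "1 \<le> R" for R
  proof -
    have ii: "(\<integral>\<^sup>+ y. ennreal \<kappa>0 * indicator (E k) y \<partial>lebesgue) = ennreal \<kappa>0 * emeasure lebesgue (E k)"
      by (rule nn_integral_cmult_indicator[OF Em])
    have "ennreal \<kappa> = (\<integral>\<^sup>+ y. ennreal \<kappa>0 * indicator (E k) y \<partial>lebesgue)"
      unfolding ii EmE using \<kappa>0 mE by (simp add: \<kappa>_def ennreal_mult)
    also have "\<dots> \<le> (\<integral>\<^sup>+ y\<in>ball 0 R. \<sigma> y \<partial>lebesgue)"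
    proof (intro nn_integral_mono)
      fix y
      show "ennreal \<kappa>0 * indicator (E k) y \<le> \<sigma> y * indicator (ball 0 R) y"
      proof (cases "y \<in> E k")
        case True
        hence yb: "y \<in> ball 0 R" and wy: "w y \<le> K" using R by (auto simp: E_def f1_def K_def)
        have "ennreal \<kappa>0 \<le> \<sigma> y"
        proof (cases "w y = 0")
          case False
          hence "0 < w y" using wt by (auto simp: is_weight_def order_less_le)
          hence "K powr (- 1 / (q - 1)) \<le> w y powr (- 1 / (q - 1))"
            using wy q by (intro powr_mono2') (auto simp: divide_nonpos_pos)
          thus ?thesis using False by (simp add: \<sigma>_def \<kappa>0_def)
        qed (simp add: \<sigma>_def)
        thus ?thesis using True yb by simp
      qed simp
    qed
    finally show ?thesis .
  qed
  define C where "C = max 0 C0 * V powr q / \<kappa> powr (q - 1)"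
  have "wmeas w (ball 0 R) \<le> ennreal (C * R powr (real DIM('a) * q))" if R: "1 \<le> R" for R
  proof -
    let ?I = "\<integral>\<^sup>+ y\<in>ball 0 R. \<sigma> y \<partial>lebesgue"
    have ep: "ennreal (\<kappa> powr (q - 1)) \<le> epowr ?I (q - 1)"
    proof (cases "?I = \<infinity>")
      case False
      then obtain r where r: "?I = ennreal r" "0 \<le> r" by (cases ?I) auto
      hence "\<kappa> \<le> r" using Ilow[OF R] \<kappa> by simp
      hence "\<kappa> powr (q - 1) \<le> r powr (q - 1)" using \<kappa> q by (intro powr_mono2) auto
      thus ?thesis using r False by (simp add: epowr_def)
    qed (simp add: epowr_def)
    have "wmeas w (ball 0 R) * ennreal (\<kappa> powr (q - 1)) \<le> wmeas w (ball 0 R) * epowr ?I (q - 1)"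
      using ep by (intro mult_left_mono) auto
    also have "\<dots> \<le> ennreal C0 * ennreal (measure lebesgue (ball (0::'a) R) powr q)" using AC[of R 0] R by simp
    also have "\<dots> \<le> ennreal (max 0 C0 * measure lebesgue (ball (0::'a) R) powr q)"
      by (cases "C0 \<ge> 0") (auto simp: ennreal_mult[symmetric] ennreal_neg)
    finally have "wmeas w (ball 0 R) \<le> ennreal (max 0 C0 * measure lebesgue (ball (0::'a) R) powr q / \<kappa> powr (q - 1))"
      using \<kappa> by (intro ennreal_div_le) auto
    also have "max 0 C0 * measure lebesgue (ball (0::'a) R) powr q / \<kappa> powr (q - 1) = C * R powr (real DIM('a) * q)"
      using R V meas_ball[of R "0::'a"]
      by (simp add: C_def V_def powr_mult powr_realpow[symmetric] powr_powr)
    finally show ?thesis .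
  qed
  moreover have "0 \<le> C" by (simp add: C_def)
  ultimately show ?thesis using q by (intro exI[of _ C] exI[of _ "real DIM('a) * q"]) auto
qed

lemma growth:
  fixes w :: "'a::euclidean_space \<Rightarrow> real"
  assumes "w \<in> A_inf"
  shows "\<exists>C D. 0 \<le> C \<and> 0 \<le> D \<and> (\<forall>R\<ge>1. wmeas w (ball 0 R) \<le> ennreal (C * R powr D))"
  using assms growth_A1 growth_Aq unfolding A_inf_def by auto

lemma h_integrable:
  fixes w :: "'a::euclidean_space \<Rightarrow> real"
  assumes wt: "is_weight w" and C: "0 \<le> C" and D: "0 \<le> D"
    and G: "\<forall>R\<ge>1. wmeas w (ball 0 R) \<le> ennreal (C * R powr D)"
  shows "(\<integral>\<^sup>+ x. ennreal ((exp 1 + norm x) powr (- (D + 2)) * w x) \<partial>lebesgue) < \<infinity>"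
proof -
  define m where "m = D + 2"
  define f where "f = (\<lambda>k::nat. \<lambda>x::'a. ennreal (real (Suc k) powr (- m)) * (ennreal (w x) * indicator (ball 0 (real (Suc k))) x))"
  have w0: "\<And>x. 0 \<le> w x" using wt by (auto simp: is_weight_def)
  have gm: "(\<lambda>x. ennreal (w x) * indicator (ball (0::'a) R) x) \<in> borel_measurable lebesgue" for R
  proof -
    have "(\<lambda>x. ennreal (w x) * indicator (ball (0::'a) R) x) = (\<lambda>x. ennreal (indicator (ball 0 R) x * (indicator (cball 0 R) x * w x)))"
      by (auto simp: indicator_def fun_eq_iff)
    moreover have "(\<lambda>x. indicator (ball (0::'a) R) x * (indicator (cball 0 R) x * w x)) \<in> borel_measurable lebesgue"
      by (rule borel_measurable_times[OF borel_measurable_indicator weight_meas[OF wt, of R]]) simp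
    ultimately show ?thesis by simp
  qed
  have "(\<integral>\<^sup>+ x. ennreal ((exp 1 + norm x) powr (- m) * w x) \<partial>lebesgue) \<le> (\<integral>\<^sup>+ x. (\<Sum>k. f k x) \<partial>lebesgue)"
  proof (intro nn_integral_mono)
    fix x :: 'a
    define k0 where "k0 = nat \<lfloor>norm x\<rfloor>"
    have k0: "real k0 \<le> norm x" "norm x < real (Suc k0)" unfolding k0_def
      by (auto simp: of_nat_nat) linarith
    have "(exp 1 + norm x) powr (- m) \<le> real (Suc k0) powr (- m)"
    proof (rule powr_mono2')
      show "- m \<le> 0" using D by (simp add: m_def)
      show "real (Suc k0) \<le> exp 1 + norm x" using k0(1) exp_ge_add_one_self[of 1] by simp
    qed simp
    hence "ennreal ((exp 1 + norm x) powr (- m) * w x) \<le> f k0 x"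
      using k0 w0[of x] by (simp add: f_def ennreal_mult[symmetric] mult_right_mono)
    also have "\<dots> = sum (\<lambda>k. f k x) {k0}" by simp
    also have "\<dots> \<le> (\<Sum>k. f k x)" by (rule sum_le_suminf) auto
    finally show "ennreal ((exp 1 + norm x) powr (- m) * w x) \<le> (\<Sum>k. f k x)" .
  qed
  also have "\<dots> = (\<Sum>k. \<integral>\<^sup>+ x. f k x \<partial>lebesgue)"
    by (rule nn_integral_suminf) (use gm in \<open>simp add: f_def\<close>)
  also have "\<dots> \<le> (\<Sum>k. ennreal (C * real (Suc k) powr (-2)))"
  proof (intro suminf_le)
    fix k
    have "(\<integral>\<^sup>+ x. f k x \<partial>lebesgue) = ennreal (real (Suc k) powr (- m)) * wmeas w (ball 0 (real (Suc k)))"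
      unfolding f_def wmeas_def by (rule nn_integral_cmult[OF gm])
    also have "\<dots> \<le> ennreal (real (Suc k) powr (- m)) * ennreal (C * real (Suc k) powr D)"
      using G by (intro mult_left_mono) auto
    also have "\<dots> = ennreal (C * real (Suc k) powr (-2))"
      using C by (simp add: ennreal_mult[symmetric] m_def powr_diff powr_add powr_minus field_simps)
    finally show "(\<integral>\<^sup>+ x. f k x \<partial>lebesgue) \<le> ennreal (C * real (Suc k) powr (-2))" .
  qed auto
  also have "\<dots> = ennreal (\<Sum>k. C * real (Suc k) powr (-2))"
  proof (rule suminf_ennreal2)
    show "\<And>k. 0 \<le> C * real (Suc k) powr (-2)" using C by simp
    have "summable (\<lambda>k. real k powr (-2))" by (simp add: summable_real_powr_iff)
    hence "summable (\<lambda>k. real (Suc k) powr (-2))" by (subst summable_Suc_iff)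
    thus "summable (\<lambda>k. C * real (Suc k) powr (-2))" by (rule summable_mult)
  qed
  also have "\<dots> < \<infinity>" by simp
  finally show ?thesis by (simp add: m_def)
qed

lemma pointwise:
  fixes px py :: ereal and nx ny c m s t q :: real
  assumes px1: "1 \<le> px" and py1: "1 \<le> py" and nx: "0 \<le> nx" and ny: "0 \<le> ny"
    and c: "0 < c" and m: "0 < m" and s: "0 < s" and t: "0 \<le> t"
    and hpx: "\<bar>recip px - q\<bar> \<le> c / ln (exp 1 + nx)"
    and hpy: "\<bar>recip py - q\<bar> \<le> c / ln (exp 1 + ny)"
    and vy: "(if py = \<infinity> then (if 1 < t then \<infinity> else 0) else ennreal (t powr real_of_ereal py)) \<le> ennreal s"
  shows "(if px = \<infinity> then (if 1 < exp (- (2 * c * m)) / max 1 s * t then \<infinity> else 0)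
            else ennreal ((exp (- (2 * c * m)) / max 1 s * t) powr real_of_ereal px))
         \<le> (if py = \<infinity> then (if 1 < t then \<infinity> else 0) else ennreal (t powr real_of_ereal py))
           + ennreal ((exp 1 + nx) powr (- m)) + ennreal ((exp 1 + ny) powr (- m))"
    (is "?LHS \<le> ?VY + ?HX + ?HY")
proof -
  define S where "S = max 1 s"
  define l where "l = 2 * c * m"
  have S1: "1 \<le> S" by (simp add: S_def)
  have l0: "0 < l" using c m by (simp add: l_def)
  have tS: "t \<le> S"
  proof (cases "py = \<infinity>")
    case True
    hence "\<not> 1 < t" using vy by (auto split: if_splits simp: top_unique)
    thus ?thesis using S1 by simp
  next
    case False
    define Py where "Py = real_of_ereal py"
    have pyr: "py = ereal Py" using False py1 by (cases py) (auto simp: Py_def)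
    have Py1: "1 \<le> Py" using py1 pyr by simp
    have "t powr Py \<le> s" using vy False pyr s by (simp add: ennreal_le_iff2)
    show ?thesis
    proof (cases "1 < t")
      case True
      have "t = t powr 1" using True by simp
      also have "\<dots> \<le> t powr Py" using True Py1 by (intro powr_mono) auto
      finally show ?thesis using \<open>t powr Py \<le> s\<close> by (simp add: S_def)
    qed (use S1 in simp)
  qed
  show ?thesis
  proof (cases "t = 0")
    case True
    thus ?thesis by (auto simp: S_def)
  next
    case False
    hence tp: "0 < t" using t by simp
    define \<tau> where "\<tau> = t / S"
    have \<tau>: "0 < \<tau>" "\<tau> \<le> 1" "\<tau> \<le> t" using tp tS S1 by (auto simp: \<tau>_def field_simps)
    define u where "u = exp (- l) / S * t"
    have u_eq: "u = exp (- l) * \<tau>" by (simp add: u_def \<tau>_def)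
    have u0: "0 < u" using \<tau> by (simp add: u_eq)
    have u1: "u \<le> 1"
    proof -
      have "exp (- l) \<le> 1" using l0 by simp
      thus ?thesis unfolding u_eq using \<tau> by (simp add: mult_le_one)
    qed
    have LHS: "?LHS = (if px = \<infinity> then 0 else ennreal (u powr real_of_ereal px))"
    proof -
      have nu: "\<not> 1 < exp (- (2 * c * m)) / max 1 s * t" using u1 unfolding u_def l_def S_def by linarith
      show ?thesis unfolding u_def l_def S_def by (cases "px = \<infinity>") (simp_all only: nu if_True if_False)
    qed
    show ?thesis
    proof (cases "px = \<infinity>")
      case True thus ?thesis unfolding LHS by simp
    next
      case pxf: False
      define Px where "Px = real_of_ereal px"
      have pxr: "px = ereal Px" using pxf px1 by (cases px) (auto simp: Px_def)
      have Px1: "1 \<le> Px" using px1 pxr by simp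
      define a where "a = 1 / Px"
      have a: "0 < a" using Px1 by (simp add: a_def)
      have ra: "recip px = a" using Px1 by (simp add: recip_def pxr a_def inverse_eq_divide)
      define b where "b = recip py"
      have b0: "0 \<le> b"
      proof (cases py)
        case (real r) thus ?thesis using py1 by (simp add: b_def recip_def)
      qed (use py1 in \<open>auto simp: b_def recip_def\<close>)
      define L where "L = - ln \<tau>"
      have L: "0 \<le> L" using \<tau> by (simp add: L_def)
      have enx: "0 < exp 1 + nx" "exp 1 + nx \<noteq> 0" using nx exp_gt_zero[of 1] by linarith+
      have eny: "0 < exp 1 + ny" "exp 1 + ny \<noteq> 0" using ny exp_gt_zero[of 1] by linarith+
      define lx where "lx = ln (exp 1 + nx)"
      define ly where "ly = ln (exp 1 + ny)"
      have lx: "1 \<le> lx" unfolding lx_def using nx by (subst ln_ge_iff) (auto simp: add_pos_nonneg)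
      have ly: "1 \<le> ly" unfolding ly_def using ny by (subst ln_ge_iff) (auto simp: add_pos_nonneg)
      have core: "m * lx \<le> (L + l) / a \<or> m * ly \<le> (L + l) / a \<or> (0 < b \<and> L / b \<le> (L + l) / a)"
        by (rule core_real[OF a b0 c m lx ly _ _ L l_def, of q])
           (use hpx hpy ra in \<open>simp_all add: lx_def ly_def b_def\<close>)
      have uP: "u powr Px = exp (- ((L + l) / a))"
        using u0 \<tau> Px1 by (simp add: powr_def u_eq ln_mult L_def a_def algebra_simps)
      have hxe: "(exp 1 + nx) powr (- m) = exp (- (m * lx))"
        using enx by (simp add: powr_def lx_def)
      have hye: "(exp 1 + ny) powr (- m) = exp (- (m * ly))"
        using eny by (simp add: powr_def ly_def)
      have "u powr Px \<le> (exp 1 + nx) powr (- m) \<or> u powr Px \<le> (exp 1 + ny) powr (- m)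
            \<or> (py \<noteq> \<infinity> \<and> u powr Px \<le> t powr real_of_ereal py)"
      proof -
        { assume "m * lx \<le> (L + l) / a"
          hence "u powr Px \<le> (exp 1 + nx) powr (- m)" unfolding uP hxe by simp }
        moreover
        { assume "m * ly \<le> (L + l) / a"
          hence "u powr Px \<le> (exp 1 + ny) powr (- m)" unfolding uP hye by simp }
        moreover
        { assume B: "0 < b" "L / b \<le> (L + l) / a"
          have pyf: "py \<noteq> \<infinity>" using B(1) by (auto simp: b_def recip_def)
          define Py where "Py = real_of_ereal py"
          have pyr: "py = ereal Py" using pyf py1 by (cases py) (auto simp: Py_def)
          have Py1: "1 \<le> Py" using py1 pyr by simp
          have bP: "b = 1 / Py" using Py1 by (simp add: b_def recip_def pyr inverse_eq_divide)
          have "u powr Px \<le> exp (- (L / b))" unfolding uP using B(2) by simp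
          also have "exp (- (L / b)) = \<tau> powr Py" using \<tau> Py1 by (simp add: powr_def bP L_def)
          also have "\<dots> \<le> t powr Py" using \<tau> Py1 by (intro powr_mono2) auto
          finally have "py \<noteq> \<infinity> \<and> u powr Px \<le> t powr real_of_ereal py" using pyf by (simp add: Py_def) }
        ultimately show ?thesis using core by blast
      qed
      moreover have "?HX \<le> ?VY + ?HX + ?HY" "?HY \<le> ?VY + ?HX + ?HY" by (simp_all add: add_ac)
      moreover have "py \<noteq> \<infinity> \<Longrightarrow> ennreal (t powr real_of_ereal py) \<le> ?VY + ?HX + ?HY" by (simp add: add.assoc)
      ultimately have "ennreal (u powr Px) \<le> ?VY + ?HX + ?HY"
        by (meson ennreal_leI order_trans)
      thus ?thesis unfolding LHS using pxf by (simp add: Px_def)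
    qed
  qed
qed

theorem lemma5p7:
  fixes \<Omega> :: "'a::euclidean_space set" and w :: "'a \<Rightarrow> real" and p :: "'a \<Rightarrow> ereal"
  assumes "open \<Omega>"
    and "w \<in> A_inf"
    and "p \<in> borel_measurable (restrict_space lebesgue \<Omega>)"
    and "\<forall>x\<in>\<Omega>. 1 \<le> p x"
    and "log_Hoelder_decay \<Omega> p"
  shows "A2_weighted \<Omega> w (var_power p)"
proof -
  obtain pinf c2 where c2: "0 < c2" and LH: "\<forall>x\<in>\<Omega>. \<bar>recip (p x) - recip pinf\<bar> \<le> c2 / ln (exp 1 + norm x)"
    using assms(5) by (auto simp: log_Hoelder_decay_def)
  obtain C D where CD: "0 \<le> C" "0 \<le> D" "\<forall>R\<ge>1. wmeas w (ball 0 R) \<le> ennreal (C * R powr D)"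
    using growth[OF assms(2)] by blast
  have wt: "is_weight w" using assms(2)
    by (auto simp: A_inf_def A_1_def A_q_def)
  have w0: "\<And>x. 0 \<le> w x" using wt by (auto simp: is_weight_def)
  define m where "m = D + 2"
  have m: "0 < m" using CD by (simp add: m_def)
  define h where "h = (\<lambda>x::'a. (exp 1 + norm x) powr (- m))"
  have h0: "\<And>x. 0 \<le> h x" by (simp add: h_def)
  have h1: "\<And>x. h x \<le> 1"
  proof -
    fix x :: 'a
    have "h x \<le> 1 powr (- m)" unfolding h_def
      using m exp_ge_add_one_self[of 1] norm_ge_zero[of x] by (intro powr_mono2') linarith+
    thus "h x \<le> 1" by simp
  qed
  have hm: "h \<in> borel_measurable (restrict_space lebesgue \<Omega>)"
  proof -
    have pos: "\<And>x::'a. 0 < exp 1 + norm x" using exp_gt_zero[of 1] norm_ge_zero by (smt (verit))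
    have "continuous_on \<Omega> h" unfolding h_def using pos by (intro continuous_intros) (auto, metis less_irrefl)
    moreover have "\<Omega> \<in> sets lebesgue" using assms(1) by simp
    ultimately show ?thesis by (rule continuous_imp_measurable_on_sets_lebesgue)
  qed
  have hint: "(\<integral>\<^sup>+ x\<in>\<Omega>. ennreal (\<bar>h x\<bar> * w x) \<partial>lebesgue) < \<infinity>"
  proof -
    have "(\<integral>\<^sup>+ x\<in>\<Omega>. ennreal (\<bar>h x\<bar> * w x) \<partial>lebesgue) \<le> (\<integral>\<^sup>+ x. ennreal ((exp 1 + norm x) powr (- (D + 2)) * w x) \<partial>lebesgue)"
      by (intro nn_integral_mono) (auto simp: h_def m_def indicator_def)
    also have "\<dots> < \<infinity>" by (rule h_integrable[OF wt CD])
    finally show ?thesis .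
  qed
  show ?thesis
    unfolding A2_weighted_def
  proof (intro allI impI)
    fix s :: real assume s: "0 < s"
    define \<beta> where "\<beta> = exp (- (2 * c2 * m)) / max 1 s"
    have \<beta>0: "0 < \<beta>" by (simp add: \<beta>_def)
    have \<beta>1: "\<beta> \<le> 1"
    proof -
      have "exp (- (2 * c2 * m)) \<le> 1" using c2 m by simp
      moreover have "1 \<le> max 1 s" by simp
      moreover have "exp (- (2 * c2 * m)) / max 1 s \<le> exp (- (2 * c2 * m)) / 1"
        by (intro divide_left_mono) auto
      ultimately show ?thesis unfolding \<beta>_def by linarith
    qed
    have main: "\<forall>x\<in>\<Omega> - {}. \<forall>y\<in>\<Omega> - {}. \<forall>t::real. 0 \<le> t \<longrightarrow> var_power p y t \<le> ennreal s \<longrightarrow>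
          var_power p x (\<beta> * t) \<le> var_power p y t + ennreal (h x) + ennreal (h y)"
    proof (intro ballI allI impI)
      fix x y t assume xy: "x \<in> \<Omega> - {}" "y \<in> \<Omega> - {}" and t: "0 \<le> t" and vy: "var_power p y t \<le> ennreal s"
      show "var_power p x (\<beta> * t) \<le> var_power p y t + ennreal (h x) + ennreal (h y)"
        using pointwise[of "p x" "p y" "norm x" "norm y" c2 m s t "recip pinf"] xy assms(4) LH c2 m s t vy
        unfolding var_power_def h_def \<beta>_def by simp
    qed
    show "\<exists>\<beta>2 h. 0 < \<beta>2 \<and> \<beta>2 \<le> 1 \<and> h \<in> borel_measurable (restrict_space lebesgue \<Omega>) \<and>
      (\<forall>x\<in>\<Omega>. 0 \<le> h x) \<and> (\<integral>\<^sup>+ x\<in>\<Omega>. ennreal (\<bar>h x\<bar> * w x) \<partial>lebesgue) < \<infinity> \<and>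
      (\<exists>M::real. AE x in lebesgue. x \<in> \<Omega> \<longrightarrow> \<bar>h x\<bar> \<le> M) \<and>
      (\<exists>N \<in> null_sets lebesgue. \<forall>x\<in>\<Omega> - N. \<forall>y\<in>\<Omega> - N. \<forall>t::real. 0 \<le> t \<longrightarrow>
          var_power p y t \<le> ennreal s \<longrightarrow>
          var_power p x (\<beta>2 * t) \<le> var_power p y t + ennreal (h x) + ennreal (h y))"
      using \<beta>0 \<beta>1 hm h0 hint h1 main
      by (intro exI[of _ \<beta>] exI[of _ h] conjI bexI[of _ "{}"] exI[of _ 1]) auto
  qed
qed

end
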